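(* In the cylindrical dual-RSK algorithm (with fixed $N\ge1$, $L$, $L-N\ge1$), let $w_1<w_2$ be entries of $\{1,\dots,N\}$ that are column-inserted successively (first $w_1$, then $w_2$) into a cylindrical infinite Young tableau during the same time step. Then it cannot happen that the insertion of $w_1$ is interior while the insertion of $w_2$ is cylindrical. In other words, among the insertions performed at a given time step, all the cylindrical insertions happen before the interior insertions.
   Context: Fix integers $N\ge1$, $L$ with $L-N\ge1$. Innovation data is a two-row array $\binom{a_1\,a_2\,\cdots}{b_1\,b_2\,\cdots}$ with $a_i\in\mathbb{N}$ nondecreasing, $b_i\in\{1,\dots,N\}$, and $b_i\le b_{i+1}$ whenever $a_i=a_{i+1}$. A cylindrical infinite Young tableau consists of a main tableau $\mathcal{P}_0$ (a filling of a Young diagram by positive integers, rows weakly increasing to the right, columns strictly increasing downward; columns have at most $N$ boxes, although entries of $\mathcal{P}_0$ may pass below row $N$ after an overflow) together with copies $\mathcal{P}_m$, $m\in\mathbb{Z}$: $\mathcal{P}_m$ is obtained from $\mathcal{P}_0$ by adding $mN$ to every entry and translating it $m(L-N)$ columns to the left and $mN$ rows down. If $\lambda=(\lambda_1\ge\dots\ge\lambda_N)$ are the row lengths of $\mathcal{P}_0$, there is an overflow of the first $k$ rows when $\lambda_1=\dots=\lambda_k=L-N+\lambda_N$. Cylindrical dual-RSK: starting from the empty tableau, at time $n$ the entries $b_i$ with $a_i=n$ are inserted in the order of the array. To insert $b$: in the current column of $\mathcal{P}_0$ (starting with the first), if every entry is strictly smaller than $b$, $b$ is appended at the end of the column; otherwise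 $b$ replaces the uppermost entry $w\ge b$ of the column and $w$ is inserted in the same way into the next column; this is done simultaneously in each copy $\mathcal{P}_m$ with the entry $b+mN$. When the first $k$ rows overflow and $1\le b\le k$, the insertion displaces a box of $\mathcal{P}_0$ into the period $\mathcal{P}_{-1}$, which may in turn displace a box into $\mathcal{P}_{-2}$, and so on (at most $N$ times); afterwards all copies are updated to agree with the new $\mathcal{P}_0$. A tableau $\mathcal{Q}$ records in each newly created box the time of its creation and a tableau $\mathcal{W}$ records the winding of the insertion path that created it (the number of times the insertion path crossed between periods). The insertion path of an insertion is the set of coordinates of boxes changed by it. An insertion path is interior if it did not move past the first row (did not cross between periods), and cylindrical otherwise. *)

theory Defs
  imports Main
begin

text \<open>
  Global (unfolded) model of a cylindrical infinite Young tableau.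
  A state is a filling  T :: int \<Rightarrow> int \<Rightarrow> int option  of the plane
  (row index r, growing downward; column index c, growing to the right);
  T r c = None means that the box (r,c) is empty.  The main tableau P_0 lives
  in rows 1..N starting at column 1; the copy P_m is P_0 shifted by
  m*N rows down and m*(L-N) columns to the left, with entries increased by m*N.
  Hence the state is always kept periodic:
     T (r + m*N) (c - m*(L-N)) = map_option (\<lambda>v. v + m*N) (T r c).
\<close>

type_synonym cyl_tab = "int \<Rightarrow> int \<Rightarrow> int option"

definition cyl_empty :: cyl_tab where
  "cyl_empty = (\<lambda>r c. None)"

text \<open>Top boundary of global column c: the first row of the uppermost copy P_m
  whose (empty) diagram contains column c, i.e. the least m with
  c \<ge> 1 - m*(L-N); the top row is m*N + 1.\<close>
definition cyl_top :: "int \<Rightarrow> int \<Rightarrow> int \<Rightarrow> int" where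
  "cyl_top N L c = 1 - N * ((c - 1) div (L - N))"

definition cyl_upd :: "int \<Rightarrow> int \<Rightarrow> cyl_tab \<Rightarrow> int \<Rightarrow> int \<Rightarrow> int \<Rightarrow> cyl_tab" where
  "cyl_upd N L T r c w =
     (\<lambda>r' c'. if (\<exists>m::int. r' = r + m * N \<and> c' = c - m * (L - N))
              then Some (w + ((r' - r) div N) * N) else T r' c')"

definition cyl_has_ge :: "int \<Rightarrow> int \<Rightarrow> cyl_tab \<Rightarrow> int \<Rightarrow> int \<Rightarrow> bool" where
  "cyl_has_ge N L T c w = (\<exists>k::nat. \<exists>v. T (cyl_top N L c + int k) c = Some v \<and> w \<le> v)"

definition cyl_bump_row :: "int \<Rightarrow> int \<Rightarrow> cyl_tab \<Rightarrow> int \<Rightarrow> int \<Rightarrow> int" where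
  "cyl_bump_row N L T c w =
     cyl_top N L c + int (LEAST k::nat. \<exists>v. T (cyl_top N L c + int k) c = Some v \<and> w \<le> v)"

definition cyl_end_row :: "int \<Rightarrow> int \<Rightarrow> cyl_tab \<Rightarrow> int \<Rightarrow> int" where
  "cyl_end_row N L T c = cyl_top N L c + int (LEAST k::nat. T (cyl_top N L c + int k) c = None)"

text \<open>Column insertion of w into column c of the cylindrical tableau T.
  cyl_col_ins N L T w c T' p : the result is T' and p is the insertion path,
  the list of coordinates (row, column) of the boxes changed (in the copy
  where the insertion started; all periodic copies are changed simultaneously).\<close>
inductive cyl_col_ins ::
  "int \<Rightarrow> int \<Rightarrow> cyl_tab \<Rightarrow> int \<Rightarrow> int \<Rightarrow> cyl_tab \<Rightarrow> (int \<times> int) list \<Rightarrow> bool"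
  for N L :: int where
  append: "\<not> cyl_has_ge N L T c w \<Longrightarrow> r = cyl_end_row N L T c \<Longrightarrow>
           cyl_col_ins N L T w c (cyl_upd N L T r c w) [(r, c)]"
| bump: "cyl_has_ge N L T c w \<Longrightarrow> r = cyl_bump_row N L T c w \<Longrightarrow> T r c = Some v \<Longrightarrow>
         cyl_col_ins N L (cyl_upd N L T r c w) v (c + 1) T' p \<Longrightarrow>
         cyl_col_ins N L T w c T' ((r, c) # p)"

definition cyl_insert :: "int \<Rightarrow> int \<Rightarrow> cyl_tab \<Rightarrow> int \<Rightarrow> cyl_tab \<Rightarrow> (int \<times> int) list \<Rightarrow> bool" where
  "cyl_insert N L T b T' p = cyl_col_ins N L T b 1 T' p"

inductive cyl_run :: "int \<Rightarrow> int \<Rightarrow> cyl_tab \<Rightarrow> int list \<Rightarrow> cyl_tab \<Rightarrow> bool"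
  for N L :: int where
  Nil: "cyl_run N L T [] T"
| Cons: "cyl_insert N L T b T' p \<Longrightarrow> cyl_run N L T' bs T'' \<Longrightarrow> cyl_run N L T (b # bs) T''"

text \<open>Interior insertion path: it never moved past the first row (row 1) of P_0,
  i.e. never crossed into the period P_{-1}.  Cylindrical otherwise.\<close>
definition interior_path :: "(int \<times> int) list \<Rightarrow> bool" where
  "interior_path p = (\<forall>(r, c) \<in> set p. 1 \<le> r)"

definition cylindrical_path :: "(int \<times> int) list \<Rightarrow> bool" where
  "cylindrical_path p = (\<not> interior_path p)"

text \<open>Innovation data: a list of columns (a_i, b_i) of the two-row array.\<close>
definition innovation_data :: "int \<Rightarrow> (nat \<times> int) list \<Rightarrow> bool" where
  "innovation_data N d =
     (sorted (map fst d) \<and> (\<forall>x \<in> set d. 1 \<le> snd x \<and> snd x \<le> N) \<and>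
      (\<forall>i. Suc i < length d \<longrightarrow> fst (d ! i) = fst (d ! Suc i) \<longrightarrow> snd (d ! i) \<le> snd (d ! Suc i)))"

end

theory Submission
  imports Defs
begin

context
  fixes N L :: int
  assumes N1: "N \<ge> 1" and K1: "L - N \<ge> 1"
begin

definition per :: "cyl_tab \<Rightarrow> bool" where
  "per T = (\<forall>r c t. T (r + t*N) (c - t*(L-N)) = map_option (\<lambda>v. v + t*N) (T r c))"

definition contig :: "cyl_tab \<Rightarrow> bool" where
  "contig T = (\<forall>c r r'. T r c \<noteq> None \<longrightarrow> cyl_top N L c \<le> r' \<longrightarrow> r' \<le> r \<longrightarrow> T r' c \<noteq> None)"

definition strict :: "cyl_tab \<Rightarrow> bool" where
  "strict T = (\<forall>c r r' x y. cyl_top N L c \<le> r \<longrightarrow> r < r' \<longrightarrow> T r c = Some x \<longrightarrow> T r' c = Some y \<longrightarrow> x < y)"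

definition good :: "cyl_tab \<Rightarrow> bool" where
  "good T = (per T \<and> contig T \<and> strict T)"

lemma top_shift: "cyl_top N L (c - t*(L-N)) = cyl_top N L c + t*N"
proof -
  have h: "(c - t*(L-N) - 1) div (L-N) = (c-1) div (L-N) - t"
  proof -
    have "c - t*(L-N) - 1 = (c-1) + (-t)*(L-N)" by (simp add: algebra_simps)
    then show ?thesis using K1 by (metis div_mult_self1 add.commute diff_conv_add_uminus not_one_le_zero zero_le_one le_numeral_extra(3) order.refl less_le_not_le linorder_not_le zero_less_one_class.zero_le_one)
  qed
  show ?thesis unfolding cyl_top_def h by (simp add: right_diff_distrib)
qed

lemma per_upd:
  assumes "per X" shows "per (cyl_upd N L X r c u)"
  unfolding per_def
proof (intro allI)
  fix \<rho> c' t
  let ?C = "\<lambda>a b. \<exists>m::int. a = r + m * N \<and> b = c - m * (L - N)"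
  have eq: "?C (\<rho> + t*N) (c' - t*(L-N)) = ?C \<rho> c'"
  proof
    assume "?C (\<rho> + t*N) (c' - t*(L-N))"
    then obtain m where "\<rho> + t*N = r + m * N" "c' - t*(L-N) = c - m * (L - N)" by blast
    then have "\<rho> = r + (m-t)*N" "c' = c - (m-t)*(L-N)" by (simp_all add: algebra_simps)
    then show "?C \<rho> c'" by blast
  next
    assume "?C \<rho> c'"
    then obtain m where "\<rho> = r + m * N" "c' = c - m * (L - N)" by blast
    then have "\<rho> + t*N = r + (m+t)*N" "c' - t*(L-N) = c - (m+t)*(L-N)" by (simp_all add: algebra_simps)
    then show "?C (\<rho> + t*N) (c' - t*(L-N))" by blast
  qed
  show "cyl_upd N L X r c u (\<rho> + t * N) (c' - t * (L - N)) =
        map_option (\<lambda>v. v + t * N) (cyl_upd N L X r c u \<rho> c')"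
  proof (cases "?C \<rho> c'")
    case True
    then obtain m where m: "\<rho> = r + m * N" "c' = c - m * (L - N)" by blast
    have d1: "(\<rho> - r) div N = m" using m N1 by simp
    have d2: "(\<rho> + t*N - r) div N = m + t"
    proof -
      have "\<rho> + t*N - r = (m+t)*N" using m by (simp add: algebra_simps)
      then show ?thesis using N1 by simp
    qed
    show ?thesis using True eq d1 d2 unfolding cyl_upd_def by (simp add: algebra_simps)
  next
    case False
    have a1: "cyl_upd N L X r c u (\<rho> + t * N) (c' - t * (L - N)) = X (\<rho> + t * N) (c' - t * (L - N))"
      using False eq unfolding cyl_upd_def by auto
    have a2: "cyl_upd N L X r c u \<rho> c' = X \<rho> c'"
      using False unfolding cyl_upd_def by auto
    show ?thesis using a1 a2 assms unfolding per_def by simp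
  qed
qed


lemma least_row:
  fixes P :: "int \<Rightarrow> bool"
  assumes "\<exists>k::nat. P (t + int k)"
  shows "t \<le> t + int (LEAST k. P (t + int k)) \<and> P (t + int (LEAST k. P (t + int k))) \<and>
         (\<forall>\<rho>. t \<le> \<rho> \<longrightarrow> \<rho> < t + int (LEAST k. P (t + int k)) \<longrightarrow> \<not> P \<rho>)"
proof (intro conjI allI impI)
  show "t \<le> t + int (LEAST k. P (t + int k))" by simp
  show "P (t + int (LEAST k. P (t + int k)))" using assms by (rule LeastI_ex)
  fix \<rho> assume a: "t \<le> \<rho>" "\<rho> < t + int (LEAST k. P (t + int k))"
  have "nat (\<rho> - t) < (LEAST k. P (t + int k))" using a by linarith
  then have "\<not> P (t + int (nat (\<rho> - t)))" by (rule not_less_Least)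
  then show "\<not> P \<rho>" using a by simp
qed

lemma bump_props:
  assumes "cyl_has_ge N L S c w"
  shows "cyl_top N L c \<le> cyl_bump_row N L S c w"
    and "\<exists>v. S (cyl_bump_row N L S c w) c = Some v \<and> w \<le> v"
    and "\<And>\<rho>. cyl_top N L c \<le> \<rho> \<Longrightarrow> \<rho> < cyl_bump_row N L S c w \<Longrightarrow> \<not> (\<exists>v. S \<rho> c = Some v \<and> w \<le> v)"
proof -
  have ex: "\<exists>k::nat. (\<lambda>\<rho>. \<exists>v. S \<rho> c = Some v \<and> w \<le> v) (cyl_top N L c + int k)"
    using assms unfolding cyl_has_ge_def by simp
  note l = least_row[OF ex]
  have e: "cyl_bump_row N L S c w = cyl_top N L c + int (LEAST k. (\<lambda>\<rho>. \<exists>v. S \<rho> c = Some v \<and> w \<le> v) (cyl_top N L c + int k))"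
    unfolding cyl_bump_row_def by simp
  show "cyl_top N L c \<le> cyl_bump_row N L S c w" unfolding e by simp
  show "\<exists>v. S (cyl_bump_row N L S c w) c = Some v \<and> w \<le> v" unfolding e using l by blast
  show "\<And>\<rho>. cyl_top N L c \<le> \<rho> \<Longrightarrow> \<rho> < cyl_bump_row N L S c w \<Longrightarrow> \<not> (\<exists>v. S \<rho> c = Some v \<and> w \<le> v)"
    unfolding e using l by blast
qed

lemma bump_gt:
  assumes "cyl_has_ge N L S c w"
    and "\<And>\<rho>. cyl_top N L c \<le> \<rho> \<Longrightarrow> \<rho> \<le> R \<Longrightarrow> \<not> (\<exists>v. S \<rho> c = Some v \<and> w \<le> v)"
  shows "R < cyl_bump_row N L S c w"
proof (rule ccontr)
  assume "\<not> R < cyl_bump_row N L S c w"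
  then have "cyl_bump_row N L S c w \<le> R" by simp
  then show False using bump_props(1,2)[of S c w, OF assms(1)] assms(2) by blast
qed

lemma end_props:
  assumes "\<exists>k::nat. S (cyl_top N L c + int k) c = None"
  shows "cyl_top N L c \<le> cyl_end_row N L S c"
    and "S (cyl_end_row N L S c) c = None"
    and "\<And>\<rho>. cyl_top N L c \<le> \<rho> \<Longrightarrow> \<rho> < cyl_end_row N L S c \<Longrightarrow> S \<rho> c \<noteq> None"
proof -
  have ex: "\<exists>k::nat. (\<lambda>\<rho>. S \<rho> c = None) (cyl_top N L c + int k)"
    using assms by simp
  note l = least_row[OF ex]
  have e: "cyl_end_row N L S c = cyl_top N L c + int (LEAST k. (\<lambda>\<rho>. S \<rho> c = None) (cyl_top N L c + int k))"
    unfolding cyl_end_row_def by simp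
  show "cyl_top N L c \<le> cyl_end_row N L S c" unfolding e by simp
  show "S (cyl_end_row N L S c) c = None" unfolding e using l by blast
  show "\<And>\<rho>. cyl_top N L c \<le> \<rho> \<Longrightarrow> \<rho> < cyl_end_row N L S c \<Longrightarrow> S \<rho> c \<noteq> None"
    unfolding e using l by blast
qed

lemma end_gt:
  assumes "\<exists>k::nat. S (cyl_top N L c + int k) c = None"
    and "\<And>\<rho>. cyl_top N L c \<le> \<rho> \<Longrightarrow> \<rho> \<le> R \<Longrightarrow> S \<rho> c \<noteq> None"
  shows "R < cyl_end_row N L S c"
proof (rule ccontr)
  assume "\<not> R < cyl_end_row N L S c"
  then have "cyl_end_row N L S c \<le> R" by simp
  then show False using end_props(1,2)[of S c, OF assms(1)] assms(2) by blast
qed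

lemma has_none:
  assumes g: "good S" and ng: "\<not> cyl_has_ge N L S c w"
  shows "\<exists>k::nat. S (cyl_top N L c + int k) c = None"
proof (rule ccontr)
  assume "\<not> ?thesis"
  then have all: "\<And>k::nat. S (cyl_top N L c + int k) c \<noteq> None" by simp
  define x where "x k = the (S (cyl_top N L c + int k) c)" for k :: nat
  have xs: "S (cyl_top N L c + int k) c = Some (x k)" for k
    using all[of k] unfolding x_def by auto
  have st: "strict S" using g unfolding good_def by simp
  have "x 0 + int k \<le> x k" for k
  proof (induction k)
    case 0 then show ?case by simp
  next
    case (Suc k)
    have a1: "cyl_top N L c \<le> cyl_top N L c + int k" by simp
    have a2: "cyl_top N L c + int k < cyl_top N L c + int (Suc k)" by simp
    have "x k < x (Suc k)"
      using st a1 a2 xs[of k] xs[of "Suc k"] unfolding strict_def by blast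
    then show ?case using Suc by simp
  qed
  then have "x 0 + int (nat (w - x 0)) \<le> x (nat (w - x 0))" by blast
  then have "w \<le> x (nat (w - x 0))" by linarith
  then have "cyl_has_ge N L S c w" unfolding cyl_has_ge_def using xs by blast
  then show False using ng by simp
qed

lemma good_empty: "good cyl_empty"
  unfolding good_def per_def contig_def strict_def cyl_empty_def by simp


inductive pure :: "cyl_tab \<Rightarrow> int \<Rightarrow> int \<Rightarrow> (int \<times> int \<times> int) list \<Rightarrow> bool" for S :: cyl_tab where
  pa: "\<not> cyl_has_ge N L S c w \<Longrightarrow> r = cyl_end_row N L S c \<Longrightarrow> pure S w c [(r, c, w)]"
| pb: "cyl_has_ge N L S c w \<Longrightarrow> r = cyl_bump_row N L S c w \<Longrightarrow> S r c = Some v \<Longrightarrow>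
       pure S v (c + 1) q \<Longrightarrow> pure S w c ((r, c, w) # q)"

fun fupd :: "cyl_tab \<Rightarrow> (int \<times> int \<times> int) list \<Rightarrow> cyl_tab" where
  "fupd X [] = X"
| "fupd X ((r, c, u) # q) = fupd (cyl_upd N L X r c u) q"

lemma upd_at:
  assumes "\<rho> = r + m*N" "c' = c - m*(L-N)"
  shows "cyl_upd N L X r c u \<rho> c' = Some (u + m*N)"
proof -
  have "(\<rho> - r) div N = m" using assms N1 by simp
  then show ?thesis using assms unfolding cyl_upd_def by auto
qed

lemma upd_off:
  assumes "\<not> (\<exists>m. \<rho> = r + m*N \<and> c' = c - m*(L-N))"
  shows "cyl_upd N L X r c u \<rho> c' = X \<rho> c'"
  using assms unfolding cyl_upd_def by auto

lemma upd_some: "X \<rho> c' \<noteq> None \<Longrightarrow> cyl_upd N L X r c u \<rho> c' \<noteq> None"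
  unfolding cyl_upd_def by auto

lemma fupd_append: "fupd X (qa @ qb) = fupd (fupd X qa) qb"
  by (induction X qa rule: fupd.induct) auto

lemma fupd_some: "X \<rho> c' \<noteq> None \<Longrightarrow> fupd X q \<rho> c' \<noteq> None"
  by (induction X q rule: fupd.induct) (auto simp: upd_some)

lemma per_fupd: "per X \<Longrightarrow> per (fupd X q)"
  by (induction X q rule: fupd.induct) (auto simp: per_upd)

lemma fupd_nohit:
  "(\<forall>(r,c,u)\<in>set q. \<forall>m. \<not> (\<rho> = r + m*N \<and> c' = c - m*(L-N))) \<Longrightarrow> fupd X q \<rho> c' = X \<rho> c'"
proof (induction X q rule: fupd.induct)
  case (1 X) then show ?case by simp
next
  case (2 X r c u q)
  then have "fupd (cyl_upd N L X r c u) q \<rho> c' = cyl_upd N L X r c u \<rho> c'" by auto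
  moreover have "cyl_upd N L X r c u \<rho> c' = X \<rho> c'" using 2(2) by (intro upd_off) auto
  ultimately show ?case by simp
qed

lemma fupd_last:
  assumes "\<forall>(r',c'',u')\<in>set qb. \<forall>m. \<not> (r = r' + m*N \<and> c = c'' - m*(L-N))"
  shows "fupd X (qa @ (r,c,u) # qb) r c = Some u"
proof -
  have "fupd X (qa @ (r,c,u) # qb) r c = fupd (cyl_upd N L (fupd X qa) r c u) qb r c"
    by (simp add: fupd_append)
  also have "\<dots> = cyl_upd N L (fupd X qa) r c u r c" using assms by (intro fupd_nohit) auto
  also have "\<dots> = Some u" using upd_at[of r r 0 c c] by simp
  finally show ?thesis .
qed

lemma fupd_cases:
  "fupd X q \<rho> c' = X \<rho> c' \<or>
   (\<exists>r c u m. (r,c,u) \<in> set q \<and> \<rho> = r + m*N \<and> c' = c - m*(L-N) \<and> fupd X q \<rho> c' = Some (u + m*N))"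
proof (induction X q rule: fupd.induct)
  case (1 X) then show ?case by simp
next
  case (2 X r c u q)
  show ?case
  proof (cases "\<exists>m. \<rho> = r + m*N \<and> c' = c - m*(L-N)")
    case True
    then obtain m where m: "\<rho> = r + m*N" "c' = c - m*(L-N)" by blast
    from 2 show ?thesis
    proof
      assume "fupd (cyl_upd N L X r c u) q \<rho> c' = cyl_upd N L X r c u \<rho> c'"
      then have v: "fupd X ((r,c,u)#q) \<rho> c' = Some (u+m*N)" using upd_at[OF m] by simp
      show ?thesis
        apply (rule disjI2)
        apply (rule exI[of _ r], rule exI[of _ c], rule exI[of _ u], rule exI[of _ m])
        using v m by simp
    next
      assume "\<exists>r' c'' u' m. (r',c'',u') \<in> set q \<and> \<rho> = r' + m*N \<and> c' = c'' - m*(L-N) \<and>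
              fupd (cyl_upd N L X r c u) q \<rho> c' = Some (u' + m*N)"
      then show ?thesis by auto
    qed
  next
    case False
    from 2 show ?thesis
    proof
      assume "fupd (cyl_upd N L X r c u) q \<rho> c' = cyl_upd N L X r c u \<rho> c'"
      then show ?thesis using upd_off[OF False] by auto
    next
      assume "\<exists>r' c'' u' m. (r',c'',u') \<in> set q \<and> \<rho> = r' + m*N \<and> c' = c'' - m*(L-N) \<and>
              fupd (cyl_upd N L X r c u) q \<rho> c' = Some (u' + m*N)"
      then show ?thesis by auto
    qed
  qed
qed

definition agree :: "cyl_tab \<Rightarrow> cyl_tab \<Rightarrow> int \<Rightarrow> int \<Rightarrow> bool" where
  "agree S' S c w = (\<forall>c' \<rho>. c \<le> c' \<longrightarrow>
     (S' \<rho> c' = S \<rho> c' \<or> (\<exists>x y. S' \<rho> c' = Some x \<and> S \<rho> c' = Some y \<and> x < w \<and> y < w)))"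

lemma ag_ge: "agree S' S c w \<Longrightarrow> (\<exists>v. S' \<rho> c = Some v \<and> w \<le> v) = (\<exists>v. S \<rho> c = Some v \<and> w \<le> v)"
  unfolding agree_def by (metis linorder_not_le option.inject order_refl)

lemma ag_none: "agree S' S c w \<Longrightarrow> (S' \<rho> c = None) = (S \<rho> c = None)"
  unfolding agree_def by (metis option.distinct(1) order_refl)

lemma ag_has_ge: "agree S' S c w \<Longrightarrow> cyl_has_ge N L S' c w = cyl_has_ge N L S c w"
  unfolding cyl_has_ge_def by (simp add: ag_ge)

lemma ag_bump: "agree S' S c w \<Longrightarrow> cyl_bump_row N L S' c w = cyl_bump_row N L S c w"
  unfolding cyl_bump_row_def by (simp add: ag_ge)

lemma ag_end: "agree S' S c w \<Longrightarrow> cyl_end_row N L S' c = cyl_end_row N L S c"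
  unfolding cyl_end_row_def by (simp add: ag_none)

lemma ag_step:
  assumes p: "per S'" and a: "agree S' S c w" and sv: "S' r c = Some v" and wv: "w \<le> v"
  shows "agree (cyl_upd N L S' r c w) S (c+1) v"
  unfolding agree_def
proof (intro allI impI)
  fix c' \<rho> assume cc: "c + 1 \<le> c'"
  have a': "S' \<rho> c' = S \<rho> c' \<or> (\<exists>x y. S' \<rho> c' = Some x \<and> S \<rho> c' = Some y \<and> x < w \<and> y < w)"
    using a cc unfolding agree_def by auto
  show "cyl_upd N L S' r c w \<rho> c' = S \<rho> c' \<or>
        (\<exists>x y. cyl_upd N L S' r c w \<rho> c' = Some x \<and> S \<rho> c' = Some y \<and> x < v \<and> y < v)"
  proof (cases "\<exists>m. \<rho> = r + m*N \<and> c' = c - m*(L-N)")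
    case True
    then obtain m where m: "\<rho> = r + m*N" "c' = c - m*(L-N)" by blast
    have "m * (L-N) < 0" using m cc by simp
    then have mneg: "m < 0" using K1 by (simp add: mult_less_0_iff)
    then have mN: "m * N < 0" using N1 by (simp add: mult_less_0_iff)
    have nv: "cyl_upd N L S' r c w \<rho> c' = Some (w + m*N)" by (rule upd_at[OF m])
    have "S' (r + m*N) (c - m*(L-N)) = map_option (\<lambda>x. x + m*N) (S' r c)" using p unfolding per_def by blast
    then have ov: "S' \<rho> c' = Some (v + m*N)" using sv m by simp
    from a' obtain y where y: "S \<rho> c' = Some y" "y < v"
    proof
      assume "S' \<rho> c' = S \<rho> c'"
      then have "S \<rho> c' = Some (v + m*N)" using ov by simp
      moreover have "v + m*N < v" using mN by simp
      ultimately show ?thesis using that by blast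
    next
      assume "\<exists>x y. S' \<rho> c' = Some x \<and> S \<rho> c' = Some y \<and> x < w \<and> y < w"
      then show ?thesis using that wv by force
    qed
    show ?thesis using nv y mN wv by auto
  next
    case False
    then have "cyl_upd N L S' r c w \<rho> c' = S' \<rho> c'" by (rule upd_off)
    then show ?thesis using a' wv by auto
  qed
qed

lemma sim:
  assumes "cyl_col_ins N L S' w c T' p" "per S'" "agree S' S c w"
  shows "\<exists>q. pure S w c q \<and> p = map (\<lambda>(r,c,u). (r,c)) q \<and> T' = fupd S' q"
  using assms
proof (induction rule: cyl_col_ins.induct)
  case (append T c w r)
  have "pure S w c [(r, c, w)]"
    using append by (intro pure.pa) (auto simp: ag_has_ge ag_end)
  then show ?case by auto
next
  case (bump T c w r v T' p)
  have wv: "w \<le> v" using bump_props(2)[OF bump(1)] bump(2,3) by auto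
  have "per (cyl_upd N L T r c w)" using bump(6) by (rule per_upd)
  moreover have "agree (cyl_upd N L T r c w) S (c+1) v" using ag_step[OF bump(6,7,3) wv] .
  ultimately obtain q where q: "pure S v (c+1) q" "p = map (\<lambda>(r,c,u). (r,c)) q"
    "T' = fupd (cyl_upd N L T r c w) q" using bump(5) by blast
  have hg: "cyl_has_ge N L S c w" using bump(1,7) ag_has_ge by simp
  have rr: "r = cyl_bump_row N L S c w" using bump(2,7) ag_bump by simp
  have "S r c = Some v"
  proof -
    have "T r c = S r c \<or> (\<exists>x y. T r c = Some x \<and> S r c = Some y \<and> x < w \<and> y < w)"
      using bump(7) unfolding agree_def by auto
    then show ?thesis using bump(3) wv by auto
  qed
  then have "pure S w c ((r,c,w) # q)" using hg rr q(1) by (intro pure.pb) auto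
  then show ?case using q by auto
qed


lemma end_ge_top: "cyl_top N L c \<le> cyl_end_row N L S c"
  unfolding cyl_end_row_def by simp

lemma pure_hd: "pure S w c q \<Longrightarrow> \<exists>r q'. q = (r, c, w) # q'"
  by (induction rule: pure.induct) auto

lemma pure_sorted:
  "pure S w c q \<Longrightarrow> sorted_wrt (\<lambda>(r,j,u) (r',j',u'). j < j' \<and> u \<le> u') q \<and> (\<forall>(r,j,u)\<in>set q. c \<le> j \<and> w \<le> u)"
proof (induction rule: pure.induct)
  case (pa c w r) then show ?case by simp
next
  case (pb c w r v q)
  have wv: "w \<le> v" using bump_props(2)[OF pb(1)] pb(2,3) by auto
  then show ?case using pb by fastforce
qed

lemma pure_dec:
  assumes "pure S w c q" "q = qa @ (r, j, u) # qb"
  shows "cyl_top N L j \<le> r \<and>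
     ((qb = [] \<and> \<not> cyl_has_ge N L S j u \<and> r = cyl_end_row N L S j) \<or>
      (\<exists>v. cyl_has_ge N L S j u \<and> r = cyl_bump_row N L S j u \<and> S r j = Some v \<and> pure S v (j+1) qb))"
  using assms
proof (induction arbitrary: qa rule: pure.induct)
  case (pa c w r')
  then have "qa = []" "qb = []" "r = r'" "j = c" "u = w" by (cases qa; auto)+
  then show ?case using pa end_ge_top by auto
next
  case (pb c w r' v q)
  show ?case
  proof (cases qa)
    case Nil
    then have "r = r'" "j = c" "u = w" "qb = q" using pb.prems by auto
    then show ?thesis using pb.hyps bump_props(1) by auto
  next
    case (Cons x qa')
    then have "q = qa' @ (r, j, u) # qb" using pb.prems by auto
    then show ?thesis using pb.IH by blast
  qed
qed

lemma good_above:
  assumes g: "good S" and x: "S R c = Some x" and t: "cyl_top N L c \<le> \<rho>" and le: "\<rho> \<le> R"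
  shows "\<exists>y. S \<rho> c = Some y \<and> y \<le> x"
proof -
  have "S \<rho> c \<noteq> None" using g x t le unfolding good_def contig_def by blast
  then obtain y where y: "S \<rho> c = Some y" by auto
  have "y \<le> x"
  proof (cases "\<rho> = R")
    case True then show ?thesis using x y by simp
  next
    case False
    then have "\<rho> < R" using le by simp
    then show ?thesis using g x y t unfolding good_def strict_def by force
  qed
  then show ?thesis using y by blast
qed

lemma per_app:
  assumes "per S" shows "S (r + t*N) (c - t*(L-N)) = map_option (\<lambda>v. v + t*N) (S r c)"
  using assms unfolding per_def by blast

lemma order_fact:
  assumes g: "good S" and pq: "pure S w c q" and dq: "q = qa @ (r, j, u) # qb"
    and e': "(r', j', u') \<in> set qb" and js: "j' = j + s*(L-N)"
  shows "r - s*N < r'"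
proof -
  have pS: "per S" using g unfolding good_def by simp
  note D = pure_dec[OF pq dq]
  have "qb \<noteq> []" using e' by auto
  then obtain v where hv: "S r j = Some v" and pqb: "pure S v (j+1) qb" using D by auto
  have srt: "\<forall>(r,j'',u'')\<in>set qb. j+1 \<le> j'' \<and> v \<le> u''" using pure_sorted[OF pqb] by simp
  then have jj: "j + 1 \<le> j'" and vu: "v \<le> u'" using e' by auto
  have "s * (L-N) \<ge> 1" using jj js by simp
  then have s1: "s \<ge> 1" using K1 by (smt (verit) mult_le_0_iff)
  then have sN: "s*N \<ge> 1" using N1 by (smt (verit) mult_le_cancel_left1)
  have j'eq: "j' = j - (-s)*(L-N)" using js by simp
  have sh: "S (r - s*N) j' = Some (v - s*N)"
    using per_app[OF pS, of r "-s" j] hv j'eq by simp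
  have top': "cyl_top N L j' = cyl_top N L j - s*N"
    using top_shift[of j "-s"] j'eq by simp
  have rtop: "cyl_top N L j \<le> r" using D by simp
  obtain qb1 qb2 where sp: "qb = qb1 @ (r', j', u') # qb2" using e' by (meson split_list)
  note D' = pure_dec[OF pqb sp]
  have rows: "\<exists>y. S \<rho> j' = Some y \<and> y < u'" if "cyl_top N L j' \<le> \<rho>" "\<rho> \<le> r - s*N" for \<rho>
    using good_above[OF g sh that] sN vu by force
  show ?thesis
  proof (cases "qb2 = [] \<and> \<not> cyl_has_ge N L S j' u' \<and> r' = cyl_end_row N L S j'")
    case True
    have hn: "\<exists>k::nat. S (cyl_top N L j' + int k) j' = None" using has_none[OF g] True by blast
    have "r - s*N < cyl_end_row N L S j'"
      using end_gt[of S j' "r - s*N", OF hn] rows by fastforce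
    then show ?thesis using True by simp
  next
    case False
    then have hg: "cyl_has_ge N L S j' u'" and rb: "r' = cyl_bump_row N L S j' u'" using D' by auto
    have "r - s*N < cyl_bump_row N L S j' u'"
      using bump_gt[OF hg] rows by force
    then show ?thesis using rb by simp
  qed
qed


lemma before:
  fixes q :: "(int \<times> int \<times> int) list"
  shows "sorted_wrt (\<lambda>(r,j,u) (r',j',u'). j < j' \<and> u \<le> u') q \<Longrightarrow> (r,j,u) \<in> set q \<Longrightarrow> (r',j',u') \<in> set q \<Longrightarrow> j < j' \<Longrightarrow>
   \<exists>qa qb. q = qa @ (r,j,u) # qb \<and> (r',j',u') \<in> set qb"
proof (induction q)
  case Nil then show ?case by simp
next
  case (Cons x xs)
  show ?case
  proof (cases "x = (r,j,u)")
    case True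
    have "x \<noteq> (r',j',u')" using True Cons.prems(4) by auto
    then have "(r',j',u') \<in> set xs" using Cons.prems(3) by simp
    then show ?thesis using True by (intro exI[of _ "[]"] exI[of _ xs]) simp
  next
    case False
    then have a: "(r,j,u) \<in> set xs" using Cons.prems by auto
    have "x \<noteq> (r',j',u')"
    proof
      assume xe: "x = (r',j',u')"
      have "\<forall>y\<in>set xs. (case y of (r2,j2,u2) \<Rightarrow> j' < j2 \<and> u' \<le> u2)" using Cons.prems(1) xe by simp
      then have "j' < j" using a by fastforce
      then show False using Cons.prems(4) by simp
    qed
    then have b: "(r',j',u') \<in> set xs" using Cons.prems by auto
    obtain qa qb where "xs = qa @ (r,j,u) # qb \<and> (r',j',u') \<in> set qb"
      using Cons.IH[OF _ a b Cons.prems(4)] Cons.prems(1) by auto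
    then show ?thesis by (intro exI[of _ "x # qa"] exI[of _ qb]) simp
  qed
qed

lemma before_val:
  fixes q :: "(int \<times> int \<times> int) list"
  assumes "sorted_wrt (\<lambda>(r,j,u) (r',j',u'). j < j' \<and> u \<le> u') q" "(r,j,u) \<in> set q" "(r',j',u') \<in> set q" "j < j'"
  shows "u \<le> u'"
proof -
  obtain qa qb where "q = qa @ (r,j,u) # qb" "(r',j',u') \<in> set qb" using before[OF assms] by blast
  then show ?thesis using assms(1) by (auto simp: sorted_wrt_append)
qed

lemma same_col:
  fixes q :: "(int \<times> int \<times> int) list"
  assumes "sorted_wrt (\<lambda>(r,j,u) (r',j',u'). j < j' \<and> u \<le> u') q" "(r,j,u) \<in> set q" "(r',j,u') \<in> set q"
  shows "r = r' \<and> u = u'"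
  using assms
proof (induction q)
  case Nil then show ?case by simp
next
  case (Cons x xs)
  have al: "\<forall>y\<in>set xs. (case x of (r1,j1,u1) \<Rightarrow> (case y of (r2,j2,u2) \<Rightarrow> j1 < j2 \<and> u1 \<le> u2))"
    using Cons.prems(1) by (cases x) simp
  have sx: "sorted_wrt (\<lambda>(r,j,u) (r',j',u'). j < j' \<and> u \<le> u') xs" using Cons.prems(1) by simp
  show ?case
  proof (cases "x = (r,j,u)")
    case True
    show ?thesis
    proof (cases "x = (r',j,u')")
      case True2: True
      then show ?thesis using True by simp
    next
      case False
      then have "(r',j,u') \<in> set xs" using Cons.prems(3) by simp
      then have "(case x of (r1,j1,u1) \<Rightarrow> (case (r',j,u') of (r2,j2,u2) \<Rightarrow> j1 < j2 \<and> u1 \<le> u2))"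
        using al by blast
      then show ?thesis using True by simp
    qed
  next
    case False
    then have a: "(r,j,u) \<in> set xs" using Cons.prems(2) by simp
    show ?thesis
    proof (cases "x = (r',j,u')")
      case True
      have "(case x of (r1,j1,u1) \<Rightarrow> (case (r,j,u) of (r2,j2,u2) \<Rightarrow> j1 < j2 \<and> u1 \<le> u2))"
        using al a by blast
      then show ?thesis using True by simp
    next
      case False
      then have "(r',j,u') \<in> set xs" using Cons.prems(3) by simp
      then show ?thesis using Cons.IH[OF sx a] by simp
    qed
  qed
qed

lemma not_ge: "\<not> cyl_has_ge N L S c w \<Longrightarrow> cyl_top N L c \<le> \<rho> \<Longrightarrow> S \<rho> c = Some v \<Longrightarrow> v < w"
  unfolding cyl_has_ge_def
  by (metis add.commute diff_add_cancel not_le zero_le_imp_eq_int le_add_diff_inverse2 diff_ge_0_iff_ge)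

lemma ge_intro: "cyl_top N L c \<le> \<rho> \<Longrightarrow> S \<rho> c = Some v \<Longrightarrow> w \<le> v \<Longrightarrow> cyl_has_ge N L S c w"
  unfolding cyl_has_ge_def
  by (metis add.commute diff_add_cancel zero_le_imp_eq_int diff_ge_0_iff_ge)

lemma per_back:
  assumes "per S" "S (\<rho> + m*N) (j - m*(L-N)) = Some x"
  shows "S \<rho> j = Some (x - m*N)"
  using per_app[OF assms(1), of \<rho> m j] assms(2) by (cases "S \<rho> j") auto


lemma pres:
  assumes g: "good T" and pq: "pure T w c q"
  shows "good (fupd T q)"
proof -
  have pT: "per T" and cT: "contig T" and sT: "strict T" using g unfolding good_def by auto
  have srt: "sorted_wrt (\<lambda>(r,j,u) (r',j',u'). j < j' \<and> u \<le> u') q" using pure_sorted[OF pq] by simp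
  have Kp: "L - N > 0" using K1 by simp
  have Np: "N > 0" using N1 by simp
  have contig': "contig (fupd T q)" unfolding contig_def
  proof (intro allI impI)
    fix c' \<rho> \<rho>' assume a: "fupd T q \<rho> c' \<noteq> None" "cyl_top N L c' \<le> \<rho>'" "\<rho>' \<le> \<rho>"
    show "fupd T q \<rho>' c' \<noteq> None"
    proof (cases "T \<rho> c' = None")
      case False then have "T \<rho>' c' \<noteq> None" using cT a unfolding contig_def by blast
      then show ?thesis by (rule fupd_some)
    next
      case True
      from fupd_cases[of T q \<rho> c'] obtain r j u m where e: "(r,j,u) \<in> set q" "\<rho> = r + m*N" "c' = j - m*(L-N)"
        using True a(1) by auto
      obtain qa qb where dq: "q = qa @ (r,j,u) # qb" using split_list[OF e(1)] by blast
      note D = pure_dec[OF pq dq]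
      have ap: "qb = [] \<and> \<not> cyl_has_ge N L T j u \<and> r = cyl_end_row N L T j"
      proof (rule ccontr)
        assume "\<not> ?thesis"
        then obtain v where "T r j = Some v" using D by auto
        then have "T \<rho> c' = Some (v + m*N)" using per_app[OF pT, of r m j] e by simp
        then show False using True by simp
      qed
      have hn: "\<exists>k::nat. T (cyl_top N L j + int k) j = None" using has_none[OF g] ap by blast
      have tc: "cyl_top N L c' = cyl_top N L j + m*N" using top_shift[of j m] e(3) by simp
      show ?thesis
      proof (cases "\<rho>' = \<rho>")
        case True then show ?thesis using a(1) by simp
      next
        case False
        then have "\<rho>' - m*N < r" using a e by simp
        moreover have "cyl_top N L j \<le> \<rho>' - m*N" using a(2) tc by simp
        ultimately have "T (\<rho>' - m*N) j \<noteq> None" using end_props(3)[of T j, OF hn] ap by simp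
        then have "T \<rho>' c' \<noteq> None" using per_app[OF pT, of "\<rho>' - m*N" m j] e(3) by auto
        then show ?thesis by (rule fupd_some)
      qed
    qed
  qed
  have strict': "strict (fupd T q)" unfolding strict_def
  proof (intro allI impI)
    fix c' \<rho> \<rho>' x y
    assume a: "cyl_top N L c' \<le> \<rho>" "\<rho> < \<rho>'" "fupd T q \<rho> c' = Some x" "fupd T q \<rho>' c' = Some y"
    have caseB: "x < y" if tx: "T \<rho> c' = Some x" and e: "(r,j,u) \<in> set q" "\<rho>' = r + m*N" "c' = j - m*(L-N)" "y = u + m*N" for r j u m
    proof -
      have tc: "cyl_top N L c' = cyl_top N L j + m*N" using top_shift[of j m] e(3) by simp
      have sh: "T (\<rho> - m*N) j = Some (x - m*N)"
        using per_back[OF pT, of "\<rho> - m*N" m j x] tx e(3) by simp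
      have r1: "cyl_top N L j \<le> \<rho> - m*N" using a(1) tc by simp
      have r2: "\<rho> - m*N < r" using a(2) e(2) by simp
      obtain qa qb where dq: "q = qa @ (r,j,u) # qb" using split_list[OF e(1)] by blast
      note D = pure_dec[OF pq dq]
      have "x - m*N < u"
      proof (cases "qb = [] \<and> \<not> cyl_has_ge N L T j u \<and> r = cyl_end_row N L T j")
        case True then show ?thesis using not_ge[of T j u "\<rho> - m*N" "x - m*N"] r1 sh by blast
      next
        case False
        then have hg: "cyl_has_ge N L T j u" and rb: "r = cyl_bump_row N L T j u" using D by auto
        have "\<not> (\<exists>v. T (\<rho> - m*N) j = Some v \<and> u \<le> v)"
          using bump_props(3)[of T j u, OF hg r1] r2 rb by simp
        then show ?thesis using sh by auto
      qed
      then show ?thesis using e(4) by simp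
    qed
    have caseC: "x < y" if e: "(r,j,u) \<in> set q" "\<rho> = r + m*N" "c' = j - m*(L-N)" "x = u + m*N" and ty: "T \<rho>' c' = Some y" for r j u m
    proof -
      obtain qa qb where dq: "q = qa @ (r,j,u) # qb" using split_list[OF e(1)] by blast
      note D = pure_dec[OF pq dq]
      show ?thesis
      proof (cases "qb = [] \<and> \<not> cyl_has_ge N L T j u \<and> r = cyl_end_row N L T j")
        case True
        have hn: "\<exists>k::nat. T (cyl_top N L j + int k) j = None" using has_none[OF g] True by blast
        have "T r j = None" using end_props(2)[of T j, OF hn] True by simp
        then have "T \<rho> c' = None" using per_app[OF pT, of r m j] e by simp
        moreover have "T \<rho> c' \<noteq> None" using cT ty a(1,2) unfolding contig_def by (metis less_imp_le option.distinct(1))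
        ultimately show ?thesis by simp
      next
        case False
        then obtain v where hg: "cyl_has_ge N L T j u" and rb: "r = cyl_bump_row N L T j u" and tv: "T r j = Some v"
          using D by auto
        have uv: "u \<le> v" using bump_props(2)[of T j u, OF hg] rb tv by auto
        have "T \<rho> c' = Some (v + m*N)" using per_app[OF pT, of r m j] e tv by simp
        then have "v + m*N < y" using sT a(1,2) ty unfolding strict_def by blast
        then show ?thesis using uv e(4) by simp
      qed
    qed
    have caseD: "x < y" if e: "(r,j,u) \<in> set q" "\<rho> = r + m*N" "c' = j - m*(L-N)" "x = u + m*N"
      and e': "(r',j',u') \<in> set q" "\<rho>' = r' + m'*N" "c' = j' - m'*(L-N)" "y = u' + m'*N" for r j u m r' j' u' m'
    proof -
      have dj: "j - j' = (m - m')*(L-N)" using e(3) e'(3) by (simp add: algebra_simps)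
      consider "j < j'" | "j = j'" | "j' < j" by linarith
      then show ?thesis
      proof cases
        case 1
        then have "0 < (m' - m)*(L-N)" using dj by (simp add: algebra_simps)
        then have "0 < m' - m" using Kp by (simp add: zero_less_mult_iff)
        then have "m*N < m'*N" using Np by simp
        moreover have "u \<le> u'" using before_val[OF srt e(1) e'(1) 1] .
        ultimately show ?thesis using e(4) e'(4) by simp
      next
        case 2
        then have "(m - m')*(L-N) = 0" using dj by simp
        then have "m = m'" using Kp by simp
        moreover have "r = r'" using same_col[OF srt e(1)] e'(1) 2 by blast
        ultimately show ?thesis using e(2) e'(2) a(2) by simp
      next
        case 3
        obtain qa qb where dq: "q = qa @ (r',j',u') # qb" and inb: "(r,j,u) \<in> set qb"
          using before[OF srt e'(1) e(1) 3] by blast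
        have "j = j' + (m - m')*(L-N)" using dj by simp
        then have "r' - (m - m')*N < r" using order_fact[OF g pq dq inb] by blast
        then have "\<rho>' < \<rho>" using e(2) e'(2) by (simp add: algebra_simps)
        then show ?thesis using a(2) by simp
      qed
    qed
    have cx: "T \<rho> c' = Some x \<or> (\<exists>r j u m. (r,j,u) \<in> set q \<and> \<rho> = r + m*N \<and> c' = j - m*(L-N) \<and> x = u + m*N)"
      using fupd_cases[of T q \<rho> c'] a(3) by auto
    have cy: "T \<rho>' c' = Some y \<or> (\<exists>r j u m. (r,j,u) \<in> set q \<and> \<rho>' = r + m*N \<and> c' = j - m*(L-N) \<and> y = u + m*N)"
      using fupd_cases[of T q \<rho>' c'] a(4) by auto
    show "x < y"
    proof (cases "T \<rho> c' = Some x")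
      case tx: True
      show ?thesis
      proof (cases "T \<rho>' c' = Some y")
        case True then show ?thesis using sT a(1,2) tx unfolding strict_def by blast
      next
        case False then show ?thesis using cy caseB[OF tx] by blast
      qed
    next
      case False
      then obtain r j u m where ex: "(r,j,u) \<in> set q" "\<rho> = r + m*N" "c' = j - m*(L-N)" "x = u + m*N" using cx by blast
      show ?thesis
      proof (cases "T \<rho>' c' = Some y")
        case True then show ?thesis using caseC[OF ex] by blast
      next
        case False then show ?thesis using cy caseD[OF ex] by blast
      qed
    qed
  qed
  show ?thesis unfolding good_def using per_fupd[OF pT] contig' strict' by blast
qed


lemma agree_refl: "agree S S c w"
  unfolding agree_def by simp

lemma ins_pure:
  assumes "good T" "cyl_insert N L T b T' p"
  shows "\<exists>q. pure T b 1 q \<and> p = map (\<lambda>(r,c,u). (r,c)) q \<and> T' = fupd T q"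
  using sim[of T b 1 T' p T] assms agree_refl unfolding cyl_insert_def good_def by blast

lemma run_good: "cyl_run N L T0 bs T \<Longrightarrow> good T0 \<Longrightarrow> good T"
proof (induction rule: cyl_run.induct)
  case (Nil T) then show ?case by simp
next
  case (Cons T b T' p bs T'')
  obtain q where "pure T b 1 q" "T' = fupd T q" using ins_pure[OF Cons.prems Cons.hyps(1)] by blast
  then have "good T'" using pres[OF Cons.prems] by simp
  then show ?case using Cons.IH by simp
qed

lemma hitinfo:
  assumes g: "good T" and pq1: "pure T w1 c1 q1" and e: "q1 = qa @ (r,c,u) # qb"
    and e': "(r',j',u') \<in> set q1" "\<rho> = r' + m*N" "c = j' - m*(L-N)"
  shows "j' < c \<Longrightarrow> u' + m*N < u"
    and "j' = c \<Longrightarrow> \<rho> = r \<and> u' + m*N = u"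
    and "c < j' \<Longrightarrow> r < \<rho>"
    and "c < j' \<Longrightarrow> qb = (r1, c+1, u1) # qb' \<Longrightarrow> u1 < u' + m*N"
proof -
  have srt: "sorted_wrt (\<lambda>(r,j,u) (r',j',u'). j < j' \<and> u \<le> u') q1" using pure_sorted[OF pq1] by simp
  have ein: "(r,c,u) \<in> set q1" using e by simp
  have Kp: "L - N > 0" using K1 by simp
  have Np: "N > 0" using N1 by simp
  have mk: "j' - c = m*(L-N)" using e'(3) by simp
  show "u' + m*N < u" if "j' < c"
  proof -
    have "m*(L-N) < 0" using mk that by simp
    then have "m < 0" using Kp by (simp add: mult_less_0_iff)
    then have "m*N < 0" using Np by (simp add: mult_less_0_iff)
    moreover have "u' \<le> u" using before_val[OF srt e'(1) ein that] .
    ultimately show ?thesis by simp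
  qed
  show "\<rho> = r \<and> u' + m*N = u" if "j' = c"
  proof -
    have "m*(L-N) = 0" using mk that by simp
    then have "m = 0" using Kp by simp
    moreover have "r' = r \<and> u' = u" using same_col[OF srt e'(1)] ein that by blast
    ultimately show ?thesis using e'(2) by simp
  qed
  show "r < \<rho>" if cj: "c < j'"
  proof -
    obtain qa' qb' where dq: "q1 = qa' @ (r,c,u) # qb'" and inb: "(r',j',u') \<in> set qb'"
      using before[OF srt ein e'(1) cj] by blast
    have "j' = c + m*(L-N)" using mk by simp
    then have "r - m*N < r'" using order_fact[OF g pq1 dq inb] by blast
    then show ?thesis using e'(2) by simp
  qed
  show "u1 < u' + m*N" if "c < j'" "qb = (r1, c+1, u1) # qb'"
  proof -
    have "m*(L-N) > 0" using mk that by simp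
    then have "m > 0" using Kp by (simp add: zero_less_mult_iff)
    then have "m*N > 0" using Np by simp
    moreover have "u1 \<le> u'"
    proof -
      have in1: "(r1, c+1, u1) \<in> set q1" using e that(2) by simp
      show ?thesis
      proof (cases "j' = c + 1")
        case True then show ?thesis using same_col[OF srt in1] e'(1) by blast
      next
        case False then have "c + 1 < j'" using that(1) by simp
        then show ?thesis using before_val[OF srt in1 e'(1)] by blast
      qed
    qed
    ultimately show ?thesis by simp
  qed
qed

lemma W_rt:
  assumes g: "good T" and pq1: "pure T w1 c1 q1" and e: "q1 = qa @ (r,c,u) # qb"
  shows "fupd T q1 r c = Some u"
proof -
  have srt: "sorted_wrt (\<lambda>(r,j,u) (r',j',u'). j < j' \<and> u \<le> u') q1" using pure_sorted[OF pq1] by simp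
  have nh: "\<forall>(r',j',u')\<in>set qb. \<forall>m. \<not> (r = r' + m*N \<and> c = j' - m*(L-N))"
  proof (intro ballI allI notI, clarify)
    fix r' j' u' m assume inb: "(r',j',u') \<in> set qb" and h: "r = r' + m*N" "c = j' - m*(L-N)"
    have "c < j'" using srt e inb by (auto simp: sorted_wrt_append)
    moreover have "(r',j',u') \<in> set q1" using e inb by simp
    ultimately have "r < r" using hitinfo(3)[OF g pq1 e _ h] by blast
    then show False by simp
  qed
  show ?thesis using fupd_last[OF nh] e by simp
qed

lemma W_rows:
  assumes g: "good T" and pq1: "pure T w1 c1 q1" and e: "q1 = qa @ (r,c,u) # qb"
    and "cyl_top N L c \<le> \<rho>" "\<rho> \<le> r"
  shows "fupd T q1 \<rho> c \<noteq> None"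
proof (cases "\<rho> = r")
  case True then show ?thesis using W_rt[OF g pq1 e] by simp
next
  case False
  then have lt: "\<rho> < r" using assms by simp
  note D = pure_dec[OF pq1 e]
  have "T \<rho> c \<noteq> None"
  proof (cases "qb = [] \<and> \<not> cyl_has_ge N L T c u \<and> r = cyl_end_row N L T c")
    case True
    have hn: "\<exists>k::nat. T (cyl_top N L c + int k) c = None" using has_none[OF g] True by blast
    show ?thesis using end_props(3)[of T c, OF hn] True lt assms(4) by simp
  next
    case False
    then obtain v where "T r c = Some v" using D by auto
    then show ?thesis using g lt assms(4) unfolding good_def contig_def by (metis less_imp_le option.distinct(1))
  qed
  then show ?thesis by (rule fupd_some)
qed

lemma W_above:
  assumes g: "good T" and pq1: "pure T w1 c1 q1" and e: "q1 = qa @ (r,c,u) # qb"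
    and t: "cyl_top N L c \<le> \<rho>" and lt: "\<rho> < r" and x: "fupd T q1 \<rho> c = Some x"
  shows "x < u"
proof -
  note D = pure_dec[OF pq1 e]
  from fupd_cases[of T q1 \<rho> c] show ?thesis
  proof
    assume "fupd T q1 \<rho> c = T \<rho> c"
    then have tx: "T \<rho> c = Some x" using x by simp
    show ?thesis
    proof (cases "qb = [] \<and> \<not> cyl_has_ge N L T c u \<and> r = cyl_end_row N L T c")
      case True then show ?thesis using not_ge[of T c u \<rho> x] t tx by blast
    next
      case False
      then have hg: "cyl_has_ge N L T c u" and rb: "r = cyl_bump_row N L T c u" using D by auto
      have "\<not> (\<exists>v. T \<rho> c = Some v \<and> u \<le> v)" using bump_props(3)[of T c u, OF hg t] lt rb by simp
      then show ?thesis using tx by auto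
    qed
  next
    assume "\<exists>r' j' u' m. (r',j',u') \<in> set q1 \<and> \<rho> = r' + m*N \<and> c = j' - m*(L-N) \<and> fupd T q1 \<rho> c = Some (u' + m*N)"
    then obtain r' j' u' m where h: "(r',j',u') \<in> set q1" "\<rho> = r' + m*N" "c = j' - m*(L-N)" "x = u' + m*N"
      using x by auto
    consider "j' < c" | "j' = c" | "c < j'" by linarith
    then show ?thesis
    proof cases
      case 1 then show ?thesis using hitinfo(1)[OF g pq1 e h(1-3)] h(4) by simp
    next
      case 2 then show ?thesis using hitinfo(2)[OF g pq1 e h(1-3)] lt by simp
    next
      case 3 then show ?thesis using hitinfo(3)[OF g pq1 e h(1-3)] lt by simp
    qed
  qed
qed

lemma W:
  assumes g: "good T" and pq1: "pure T w1 c1 q1" and g1: "good (fupd T q1)"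
  shows "pure (fupd T q1) v c q' \<Longrightarrow> (\<exists>qa qb r u. q1 = qa @ (r,c,u) # qb \<and> u < v) \<Longrightarrow>
         \<forall>(s,c',v')\<in>set q'. \<exists>r u. (r,c',u) \<in> set q1 \<and> r < s"
proof (induction rule: pure.induct)
  case (pa c v s)
  then obtain qa qb r u where e: "q1 = qa @ (r,c,u) # qb" "u < v" by blast
  have hn: "\<exists>k::nat. fupd T q1 (cyl_top N L c + int k) c = None" using has_none[OF g1] pa(1) by blast
  have rtop: "cyl_top N L c \<le> r" using pure_dec[OF pq1 e(1)] by simp
  have "r < cyl_end_row N L (fupd T q1) c"
    using end_gt[of "fupd T q1" c r, OF hn] W_rows[OF g pq1 e(1)] by blast
  then show ?case using pa(2) e(1) by auto
next
  case (pb c v s v' q'')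
  obtain qa qb r u where e: "q1 = qa @ (r,c,u) # qb" and uv: "u < v" using pb.prems by blast
  let ?T1 = "fupd T q1"
  note D = pure_dec[OF pq1 e]
  have srt: "sorted_wrt (\<lambda>(r,j,u) (r',j',u'). j < j' \<and> u \<le> u') q1" using pure_sorted[OF pq1] by simp
  obtain x0 where x0: "?T1 s c = Some x0" "v \<le> x0" using bump_props(2)[of ?T1 c v, OF pb(1)] pb(2) by auto
  have vv': "v \<le> v'" using x0 pb(3) by simp
  have stop: "cyl_top N L c \<le> s" using bump_props(1)[of ?T1 c v, OF pb(1)] pb(2) by simp
  have rs: "r < s"
  proof -
    have "\<not> (\<exists>x. ?T1 \<rho> c = Some x \<and> v \<le> x)" if "cyl_top N L c \<le> \<rho>" "\<rho> \<le> r" for \<rho>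
    proof (cases "\<rho> = r")
      case True then show ?thesis using W_rt[OF g pq1 e] uv by simp
    next
      case False then have "\<rho> < r" using that by simp
      then show ?thesis using W_above[OF g pq1 e that(1)] uv by force
    qed
    then have "r < cyl_bump_row N L ?T1 c v" using bump_gt[of ?T1 c v r, OF pb(1)] by blast
    then show ?thesis using pb(2) by simp
  qed
  have notlast: "\<not> (qb = [] \<and> \<not> cyl_has_ge N L T c u \<and> r = cyl_end_row N L T c)"
  proof
    assume last: "qb = [] \<and> \<not> cyl_has_ge N L T c u \<and> r = cyl_end_row N L T c"
    have "x0 \<le> u"
    proof -
      from fupd_cases[of T q1 s c] show ?thesis
      proof
        assume "fupd T q1 s c = T s c"
        then have "T s c = Some x0" using x0 by simp
        then show ?thesis using not_ge[of T c u s x0] last stop by force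
      next
        assume "\<exists>r' j' u' m. (r',j',u') \<in> set q1 \<and> s = r' + m*N \<and> c = j' - m*(L-N) \<and> fupd T q1 s c = Some (u' + m*N)"
        then obtain r' j' u' m where h: "(r',j',u') \<in> set q1" "s = r' + m*N" "c = j' - m*(L-N)" "x0 = u' + m*N"
          using x0 by auto
        have "j' \<le> c"
        proof -
          have "(r',j',u') \<in> set qa \<or> (r',j',u') = (r,c,u)" using h(1) e last by auto
          then show ?thesis using srt e by (auto simp: sorted_wrt_append)
        qed
        then consider "j' < c" | "j' = c" by linarith
        then show ?thesis
        proof cases
          case 1 then show ?thesis using hitinfo(1)[OF g pq1 e h(1-3)] h(4) by simp
        next
          case 2 then show ?thesis using hitinfo(2)[OF g pq1 e h(1-3)] h(4) by simp
        qed
      qed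
    qed
    then show False using x0 uv by simp
  qed
  then obtain u1 where hg: "cyl_has_ge N L T c u" and tu1: "T r c = Some u1" and pqb: "pure T u1 (c+1) qb"
    using D by auto
  obtain r1 qb' where qbe: "qb = (r1, c+1, u1) # qb'" using pure_hd[OF pqb] by blast
  have u1v': "u1 < v'"
  proof -
    from fupd_cases[of T q1 s c] show ?thesis
    proof
      assume "fupd T q1 s c = T s c"
      then have "T s c = Some v'" using pb(3) by simp
      moreover have "cyl_top N L c \<le> r" using D by simp
      ultimately show ?thesis using g rs tu1 unfolding good_def strict_def by blast
    next
      assume "\<exists>r' j' u' m. (r',j',u') \<in> set q1 \<and> s = r' + m*N \<and> c = j' - m*(L-N) \<and> fupd T q1 s c = Some (u' + m*N)"
      then obtain r' j' u' m where h: "(r',j',u') \<in> set q1" "s = r' + m*N" "c = j' - m*(L-N)" "v' = u' + m*N"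
        using pb(3) by auto
      consider "j' < c" | "j' = c" | "c < j'" by linarith
      then show ?thesis
      proof cases
        case 1 then show ?thesis using hitinfo(1)[OF g pq1 e h(1-3)] h(4) uv vv' by simp
      next
        case 2 then show ?thesis using hitinfo(2)[OF g pq1 e h(1-3)] rs by simp
      next
        case 3 then show ?thesis using hitinfo(4)[OF g pq1 e h(1-3) 3 qbe] h(4) by simp
      qed
    qed
  qed
  have "q1 = (qa @ [(r,c,u)]) @ (r1, c+1, u1) # qb'" using e qbe by simp
  then have "\<forall>(s,c',v')\<in>set q''. \<exists>r u. (r,c',u) \<in> set q1 \<and> r < s" using pb.IH u1v' by blast
  moreover have "(r,c,u) \<in> set q1" using e by simp
  ultimately show ?case using rs by auto
qed

lemma main:
  assumes g: "good T" and i1: "cyl_insert N L T w1 T1 p1" and i2: "cyl_insert N L T1 w2 T2 p2"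
    and w: "w1 < w2" and int1: "interior_path p1"
  shows "interior_path p2"
proof -
  obtain q1 where q1: "pure T w1 1 q1" "p1 = map (\<lambda>(r,c,u). (r,c)) q1" "T1 = fupd T q1"
    using ins_pure[OF g i1] by blast
  have g1: "good T1" using pres[OF g q1(1)] q1(3) by simp
  obtain q2 where q2: "pure T1 w2 1 q2" "p2 = map (\<lambda>(r,c,u). (r,c)) q2"
    using ins_pure[OF g1 i2] by blast
  obtain r0 q0 where "q1 = (r0, 1, w1) # q0" using pure_hd[OF q1(1)] by blast
  then have ex: "\<exists>qa qb r u. q1 = qa @ (r,1,u) # qb \<and> u < w2" using w by (intro exI[of _ "[]"] exI[of _ q0] exI[of _ r0] exI[of _ w1]) simp
  have cl: "\<forall>(s,c',v')\<in>set q2. \<exists>r u. (r,c',u) \<in> set q1 \<and> r < s"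
    using W[OF g q1(1)] g1 q1(3) q2(1) ex by blast
  have r1: "\<forall>(r,c,u)\<in>set q1. 1 \<le> r" using int1 q1(2) unfolding interior_path_def by force
  show ?thesis unfolding interior_path_def q2(2) using cl r1 by fastforce
qed

end

theorem lemma3p1:
  fixes N L :: int and d :: "(nat \<times> int) list" and i :: nat
    and T T1 T2 :: cyl_tab and p1 p2 :: "(int \<times> int) list"
  assumes "N \<ge> 1" and "L - N \<ge> 1"
    and "innovation_data N d"
    and "Suc i < length d"
    and "fst (d ! i) = fst (d ! Suc i)"
    and "snd (d ! i) < snd (d ! Suc i)"
    and "cyl_run N L cyl_empty (map snd (take i d)) T"
    and "cyl_insert N L T (snd (d ! i)) T1 p1"
    and "cyl_insert N L T1 (snd (d ! Suc i)) T2 p2"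
  shows "\<not> (interior_path p1 \<and> cylindrical_path p2)"
proof -
  have g: "good N L T" using run_good[OF assms(1,2) assms(7) good_empty[OF assms(1,2)]] .
  show ?thesis using main[OF assms(1,2) g assms(8,9,6)] unfolding cylindrical_path_def by blast
qed

end
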